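(* Let $G=(V,D,B)$ be a mixed graph on $n$ nodes with covariance matrix $\Sigma=\phi_G(\Lambda,\Omega)=(I-\Lambda)^{-T}\Omega(I-\Lambda)^{-1}$. Let $S=\{s_1,\dots,s_k\}$ and $T=\{t_1,\dots,t_k\}\subset V$, and for every $1\le i\le k$ let $H_i=\{h^i_1,\dots,h^i_{\ell_i}\}\subset\mathrm{pa}(s_i)$. Suppose there exists a half-trek system from $S$ to $T$ with no sided intersection. Then the $k\times k$ matrix $A$ with entries $$A_{ij}=\Sigma_{s_it_j}-\sum_{m=1}^{\ell_i}\Sigma_{h^i_mt_j}\lambda_{h^i_ms_i}$$ is generically invertible, i.e. $\det A$ is not identically zero as a function of $(\Lambda,\Omega)$ (so $\det A\neq 0$ for all parameters outside a proper algebraic subset of the parameter space).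
   Context: A mixed graph $G=(V,D,B)$ has directed edges $D$ ($v\to w$) and symmetric bidirected edges $B$ ($v\leftrightarrow w$), no self-loops; $\mathrm{pa}(v)=\{w:w\to v\in G\}$. Parameters: $\Lambda=(\lambda_{uv})$ real (or indeterminate) supported on $D$ with $I-\Lambda$ invertible, $\Omega$ positive definite with $\omega_{uv}=0$ for $u\ne v$ unless $u\leftrightarrow v\in G$. A path is a sequence of edges (directed edges may be traversed in either direction, vertices may repeat). A trek from $v$ to $w$ is a path of the form $v=v^L_l\leftarrow\cdots\leftarrow v^L_0\leftrightarrow v^R_0\to\cdots\to v^R_r=w$ (Left side $\{v^L_0,\dots,v^L_l\}$, Right side $\{v^R_0,\dots,v^R_r\}$) or $v=v^L_l\leftarrow\cdots\leftarrow v^L_1\leftarrow v^T\to v^R_1\to\cdots\to v^R_r=w$ (Left side $\{v^T,v^L_1,\dots,v^L_l\}$, Right side $\{v^T,v^R_1,\dots,v^R_r\}$), possibly empty. A half-trek is a trek whose Left side has exactly one vertex. A half-trek system from $S$ to $T$ is a collection of half-treks with set of sources $S$ and set of targets $T$; it has no sided intersection if distinct half-treks have disjoint Left sides and disjoint Right sides. *)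

theory Defs
  imports "HOL-Analysis.Analysis"
begin

definition mixed_graph :: "('n \<times> 'n) set \<Rightarrow> ('n \<times> 'n) set \<Rightarrow> bool" where
  "mixed_graph D B \<longleftrightarrow> sym B \<and> (\<forall>v. (v, v) \<notin> D) \<and> (\<forall>v. (v, v) \<notin> B)"

definition pa :: "('n \<times> 'n) set \<Rightarrow> 'n \<Rightarrow> 'n set" where
  "pa D v = {w. (w, v) \<in> D}"

definition dir_walk :: "('n \<times> 'n) set \<Rightarrow> 'n list \<Rightarrow> bool" where
  "dir_walk D xs \<longleftrightarrow> xs \<noteq> [] \<and> (\<forall>i. Suc i < length xs \<longrightarrow> (xs ! i, xs ! Suc i) \<in> D)"

text \<open>A trek is represented as (L, b, R) where L = [vL0, ..., vLl] and R = [vR0, ..., vRr]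
are directed walks going away from the top.  If b, the top is a bidirected edge vL0 <-> vR0;
if not b, the top is a single vertex vT = vL0 = vR0.  The trivial (empty) trek is ([v], False, [v]).\<close>

type_synonym 'n trek = "'n list \<times> bool \<times> 'n list"

definition is_trek :: "('n \<times> 'n) set \<Rightarrow> ('n \<times> 'n) set \<Rightarrow> 'n trek \<Rightarrow> bool" where
  "is_trek D B \<pi> = (case \<pi> of (L, b, R) \<Rightarrow>
      dir_walk D L \<and> dir_walk D R \<and> (if b then (hd L, hd R) \<in> B else hd L = hd R))"

definition trek_source :: "'n trek \<Rightarrow> 'n" where
  "trek_source \<pi> = last (fst \<pi>)"

definition trek_target :: "'n trek \<Rightarrow> 'n" where
  "trek_target \<pi> = last (snd (snd \<pi>))"

definition left_side :: "'n trek \<Rightarrow> 'n set" where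
  "left_side \<pi> = set (fst \<pi>)"

definition right_side :: "'n trek \<Rightarrow> 'n set" where
  "right_side \<pi> = set (snd (snd \<pi>))"

definition is_half_trek :: "('n \<times> 'n) set \<Rightarrow> ('n \<times> 'n) set \<Rightarrow> 'n trek \<Rightarrow> bool" where
  "is_half_trek D B \<pi> \<longleftrightarrow> is_trek D B \<pi> \<and> card (left_side \<pi>) = 1"

definition half_trek_system_nsi ::
  "('n \<times> 'n) set \<Rightarrow> ('n \<times> 'n) set \<Rightarrow> 'n set \<Rightarrow> 'n set \<Rightarrow> 'n trek set \<Rightarrow> bool" where
  "half_trek_system_nsi D B S T P \<longleftrightarrow>
     (\<forall>\<pi>\<in>P. is_half_trek D B \<pi>) \<and>
     trek_source ` P = S \<and> trek_target ` P = T \<and>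
     (\<forall>\<pi>1\<in>P. \<forall>\<pi>2\<in>P. \<pi>1 \<noteq> \<pi>2 \<longrightarrow>
        left_side \<pi>1 \<inter> left_side \<pi>2 = {} \<and> right_side \<pi>1 \<inter> right_side \<pi>2 = {})"

definition pos_def_mat :: "real^'n^'n \<Rightarrow> bool" where
  "pos_def_mat M \<longleftrightarrow> transpose M = M \<and> (\<forall>x. x \<noteq> 0 \<longrightarrow> x \<bullet> (M *v x) > 0)"

definition params :: "('n \<times> 'n) set \<Rightarrow> ('n \<times> 'n) set \<Rightarrow> real^'n^'n \<Rightarrow> real^'n^'n \<Rightarrow> bool" where
  "params D B \<Lambda> \<Omega> \<longleftrightarrow>
     (\<forall>u v. \<Lambda> $ u $ v \<noteq> 0 \<longrightarrow> (u, v) \<in> D) \<and> invertible (mat 1 - \<Lambda>) \<and>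
     pos_def_mat \<Omega> \<and> (\<forall>u v. u \<noteq> v \<and> \<Omega> $ u $ v \<noteq> 0 \<longrightarrow> (u, v) \<in> B)"

definition phi :: "real^'n^'n \<Rightarrow> real^'n^'n \<Rightarrow> real^'n^'n" where
  "phi \<Lambda> \<Omega> = transpose (matrix_inv (mat 1 - \<Lambda>)) ** \<Omega> ** matrix_inv (mat 1 - \<Lambda>)"

end

theory Submission
  imports Defs
begin
lemma dir_walk_drop:
  assumes "dir_walk D xs" "p < length xs"
  shows "dir_walk D (drop p xs)" "hd (drop p xs) = xs ! p" "last (drop p xs) = last xs"
    "set (drop p xs) \<subseteq> set xs" "length (drop p xs) \<le> length xs"
proof -
  show "dir_walk D (drop p xs)" using assms unfolding dir_walk_def
  proof (intro conjI allI impI)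
    show "drop p xs \<noteq> []" using assms by simp
    fix i assume "Suc i < length (drop p xs)"
    then have "Suc (p + i) < length xs" by simp
    then show "(drop p xs ! i, drop p xs ! Suc i) \<in> D" using assms unfolding dir_walk_def by simp
  qed
  show "hd (drop p xs) = xs ! p" using assms by (simp add: hd_drop_conv_nth)
  show "last (drop p xs) = last xs" using assms by simp
  show "set (drop p xs) \<subseteq> set xs" by (rule set_drop_subset)
  show "length (drop p xs) \<le> length xs" by simp
qed

lemma dir_walk_shortcut:
  assumes "dir_walk D xs" "a < c" "c < length xs" "xs ! a = xs ! c"
  defines "ys \<equiv> take a xs @ drop c xs"
  shows "dir_walk D ys" "hd ys = hd xs" "last ys = last xs"
    "set ys \<subseteq> set xs" "length ys < length xs"
proof -
  have w: "\<And>i. Suc i < length xs \<Longrightarrow> (xs ! i, xs ! Suc i) \<in> D" using assms(1) by (simp add: dir_walk_def)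
  show "dir_walk D ys" unfolding dir_walk_def
  proof (intro conjI allI impI)
    show "ys \<noteq> []" using assms by (simp add: ys_def)
    fix i assume i: "Suc i < length ys"
    have ly: "length ys = a + (length xs - c)" using assms by (simp add: ys_def)
    show "(ys ! i, ys ! Suc i) \<in> D"
    proof (cases "Suc i < a")
      case True
      then show ?thesis using w[of i] assms by (simp add: ys_def nth_append)
    next
      case False
      note F = this
      show ?thesis
      proof (cases "i < a")
        case True
        then have "i = a - 1" "Suc i = a" using F by auto
        then show ?thesis using w[of i] assms True by (simp add: ys_def nth_append)
      next
        case False
        then show ?thesis using w[of "c + (i - a)"] assms i ly
          by (simp add: ys_def nth_append Suc_diff_le)
      qed
    qed
  qed
  have ne: "xs \<noteq> []" using assms by auto
  show "hd ys = hd xs"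
  proof (cases a)
    case 0
    then show ?thesis using assms ne by (simp add: ys_def hd_drop_conv_nth hd_conv_nth)
  next
    case (Suc n)
    then show ?thesis using assms ne by (simp add: ys_def hd_conv_nth nth_append)
  qed
  show "last ys = last xs" using assms by (simp add: ys_def)
  show "set ys \<subseteq> set xs" unfolding ys_def using set_take_subset set_drop_subset by fastforce
  show "length ys < length xs" using assms by (simp add: ys_def)
qed

locale sysctx =
  fixes D B :: "('n::finite \<times> 'n) set" and s t :: "'k::finite \<Rightarrow> 'n"
  assumes inj_s: "inj s" and inj_t: "inj t"
begin

definition valid :: "('k \<Rightarrow> bool) \<Rightarrow> ('k \<Rightarrow> 'n list) \<Rightarrow> bool" where
  "valid b R \<longleftrightarrow> (\<forall>i. dir_walk D (R i) \<and> last (R i) \<in> range t \<and>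
      (if b i then (s i, hd (R i)) \<in> B else hd (R i) = s i)) \<and>
     (\<forall>i j. i \<noteq> j \<longrightarrow> set (R i) \<inter> set (R j) = {})"

definition mu :: "('k \<Rightarrow> bool) \<Rightarrow> ('k \<Rightarrow> 'n list) \<Rightarrow> nat" where
  "mu b R = (\<Sum>i\<in>UNIV. length (R i) + (if b i then 1 else 0))"

lemma mu_less:
  assumes "\<And>j. length (R' j) + (if b' j then 1 else 0) \<le> length (R j) + (if b j then 1 else (0::nat))"
    and "length (R' i) + (if b' i then 1 else 0) < length (R i) + (if b i then 1 else (0::nat))"
  shows "mu b' R' < mu b R"
  unfolding mu_def
proof (rule sum_strict_mono_ex1)
  show "\<forall>x\<in>UNIV. length (R' x) + (if b' x then 1 else 0) \<le> length (R x) + (if b x then 1 else 0)"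
    using assms(1) by blast
  show "\<exists>a\<in>UNIV. length (R' a) + (if b' a then 1 else 0) < length (R a) + (if b a then 1 else 0)"
    using assms(2) by blast
qed simp

lemma valid_update:
  assumes v: "valid b R" and w: "dir_walk D ys" and l: "last ys = last (R i)"
    and h: "if bi then (s i, hd ys) \<in> B else hd ys = s i" and st: "set ys \<subseteq> set (R i)"
  shows "valid (b(i := bi)) (R(i := ys))"
proof -
  have A: "dir_walk D ((R(i := ys)) j) \<and> last ((R(i := ys)) j) \<in> range t \<and>
      (if (b(i := bi)) j then (s j, hd ((R(i := ys)) j)) \<in> B else hd ((R(i := ys)) j) = s j)"
    for j using v w l h unfolding valid_def by (cases "j = i") auto
  have Bq: "set ((R(i := ys)) j) \<inter> set ((R(i := ys)) k) = {}"
    if "j \<noteq> k" for j k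
  proof -
    have sub: "set ((R(i := ys)) x) \<subseteq> set (R x)" for x using st by (cases "x = i") auto
    have "set (R j) \<inter> set (R k) = {}" using v that unfolding valid_def by blast
    then show ?thesis using sub[of j] sub[of k] by blast
  qed
  show ?thesis unfolding valid_def using A Bq by blast
qed

lemma get_sys:
  assumes "\<exists>P. half_trek_system_nsi D B (range s) (range t) P"
  shows "\<exists>b R. valid b R"
proof -
  obtain P where P: "half_trek_system_nsi D B (range s) (range t) P" using assms by blast
  have ex: "\<forall>i. \<exists>\<pi>. \<pi> \<in> P \<and> trek_source \<pi> = s i"
  proof
    fix i
    have "s i \<in> trek_source ` P" using P unfolding half_trek_system_nsi_def by simp
    then show "\<exists>\<pi>. \<pi> \<in> P \<and> trek_source \<pi> = s i" by force
  qed
  then obtain pi where pi0: "\<forall>i. pi i \<in> P \<and> trek_source (pi i) = s i" using choice[OF ex] by blast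
  then have pi: "\<And>i. pi i \<in> P" "\<And>i. trek_source (pi i) = s i" by simp_all
  define b where "b i = fst (snd (pi i))" for i
  define R where "R i = snd (snd (pi i))" for i
  have ht: "\<And>i. is_half_trek D B (pi i)"
  proof -
    fix i
    have "\<forall>\<pi>\<in>P. is_half_trek D B \<pi>" using P unfolding half_trek_system_nsi_def by (elim conjE)
    then show "is_half_trek D B (pi i)" using pi(1)[of i] by (rule bspec)
  qed
  have each: "dir_walk D (R i) \<and> last (R i) \<in> range t \<and>
      (if b i then (s i, hd (R i)) \<in> B else hd (R i) = s i)" for i
  proof -
    obtain L bb RR where e: "pi i = (L, bb, RR)" by (cases "pi i") auto
    have tr: "dir_walk D L" "dir_walk D RR" "if bb then (hd L, hd RR) \<in> B else hd L = hd RR"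
      using ht[of i] e unfolding is_half_trek_def is_trek_def by auto
    have c1: "card (set L) = 1" using ht[of i] e unfolding is_half_trek_def left_side_def by auto
    have ls: "last L = s i" using pi(2)[of i] e unfolding trek_source_def by simp
    have Lne: "L \<noteq> []" using tr(1) unfolding dir_walk_def by simp
    have "set L = {last L}" using c1 Lne by (metis card_1_singletonE last_in_set singletonD)
    then have "hd L = s i" using Lne ls by (metis hd_in_set singletonD)
    moreover have "last RR \<in> range t" using P pi(1)[of i] e unfolding half_trek_system_nsi_def trek_target_def
      by (metis imageI snd_conv)
    ultimately show ?thesis using tr e by (cases bb) (auto simp: b_def R_def)
  qed
  have disj: "set (R i) \<inter> set (R j) = {}" if "i \<noteq> j" for i j
  proof -
    have "pi i \<noteq> pi j" using pi(2) inj_s that by (metis injD)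
    then show ?thesis using P pi(1) unfolding half_trek_system_nsi_def right_side_def R_def by blast
  qed
  show ?thesis using each disj unfolding valid_def by blast
qed

lemma improve_distinct:
  assumes v: "valid b R" and nd: "\<not> distinct (R i)"
  shows "\<exists>b' R'. valid b' R' \<and> mu b' R' < mu b R"
proof -
  obtain a c where ac: "a < c" "c < length (R i)" "R i ! a = R i ! c"
    using nd by (metis distinct_conv_nth linorder_neqE_nat)
  have w: "dir_walk D (R i)" using v unfolding valid_def by blast
  note sc = dir_walk_shortcut[OF w ac]
  define ys where "ys = take a (R i) @ drop c (R i)"
  have "valid (b(i := b i)) (R(i := ys))"
    apply (rule valid_update[OF v])
    using sc v unfolding ys_def valid_def by auto
  moreover have "mu (b(i := b i)) (R(i := ys)) < mu b R"
    by (rule mu_less[where i=i]) (use sc in \<open>auto simp: ys_def\<close>)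
  ultimately show ?thesis by blast
qed

lemma improve_bidir:
  assumes v: "valid b R" and bi: "b i" and si: "s i \<in> set (R i)"
  shows "\<exists>b' R'. valid b' R' \<and> mu b' R' < mu b R"
proof -
  obtain p where p: "p < length (R i)" "R i ! p = s i" using si by (metis in_set_conv_nth)
  have w: "dir_walk D (R i)" using v unfolding valid_def by blast
  note dd = dir_walk_drop[OF w p(1)]
  have "valid (b(i := False)) (R(i := drop p (R i)))"
    apply (rule valid_update[OF v])
    using dd p by auto
  moreover have "mu (b(i := False)) (R(i := drop p (R i))) < mu b R"
    by (rule mu_less[where i=i]) (use dd bi in auto)
  ultimately show ?thesis by blast
qed

end

context sysctx begin

definition Gr :: "('k \<Rightarrow> bool) \<Rightarrow> ('k \<Rightarrow> 'n list) \<Rightarrow> ('k \<times> 'k) set" where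
  "Gr b R = {(i, m). b i \<and> s i \<in> set (R m)}"

lemma Gr_func:
  assumes v: "valid b R" and "(j, m) \<in> Gr b R" "(j, m') \<in> Gr b R"
  shows "m = m'"
proof (rule ccontr)
  assume "m \<noteq> m'"
  then have "set (R m) \<inter> set (R m') = {}" using v unfolding valid_def by blast
  then show False using assms(2,3) unfolding Gr_def by auto
qed

lemma improve_cycle:
  assumes v: "valid b R" and cyc: "(i0, i0) \<in> (Gr b R)\<^sup>+"
  shows "\<exists>b' R'. valid b' R' \<and> mu b' R' < mu b R"
proof -
  let ?G = "Gr b R"
  note func = Gr_func[OF v]
  define C where "C = {j. (i0, j) \<in> ?G\<^sup>+}"
  have i0C: "i0 \<in> C" using cyc by (simp add: C_def)
  have bk: "(j, i0) \<in> ?G\<^sup>*" if "(i0, j) \<in> ?G\<^sup>+" for j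
    using that
  proof (induction rule: trancl_induct)
    case (base y)
    obtain z where "(i0, z) \<in> ?G" "(z, i0) \<in> ?G\<^sup>*" using tranclD[OF cyc] by blast
    then show ?case using func base by metis
  next
    case (step y z)
    show ?case
    proof (cases "y = i0")
      case True
      obtain w where "(i0, w) \<in> ?G" "(w, i0) \<in> ?G\<^sup>*" using tranclD[OF cyc] by blast
      then show ?thesis using func step True by metis
    next
      case False
      then have "(y, i0) \<in> ?G\<^sup>+" using step.IH by (meson rtranclD)
      then obtain w where "(y, w) \<in> ?G" "(w, i0) \<in> ?G\<^sup>*" using tranclD by metis
      then show ?thesis using func step(2) by metis
    qed
  qed
  have succ: "\<exists>m. (j, m) \<in> ?G \<and> m \<in> C" if "j \<in> C" for j
  proof -
    have jt: "(i0, j) \<in> ?G\<^sup>+" using that by (simp add: C_def)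
    have "(j, i0) \<in> ?G\<^sup>+"
    proof (cases "j = i0")
      case True then show ?thesis using cyc by simp
    next
      case False then show ?thesis using bk[OF jt] by (meson rtranclD)
    qed
    then obtain m where m: "(j, m) \<in> ?G" using tranclD by metis
    have "(i0, m) \<in> ?G\<^sup>+" using jt m by (rule trancl_into_trancl)
    then show ?thesis using m by (auto simp: C_def)
  qed
  define g where "g j = (SOME m. (j, m) \<in> ?G)" for j
  have gG: "(j, g j) \<in> ?G" "g j \<in> C" if jC: "j \<in> C" for j
  proof -
    obtain m where m: "(j, m) \<in> ?G" "m \<in> C" using succ[OF jC] by blast
    have "(j, g j) \<in> ?G" using m(1) unfolding g_def by (rule someI)
    then show "(j, g j) \<in> ?G" "g j \<in> C" using m func by auto
  qed
  have gsurj: "g ` C = C"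
  proof
    show "g ` C \<subseteq> C" using gG by auto
    show "C \<subseteq> g ` C"
    proof
      fix j assume "j \<in> C"
      then have "(i0, j) \<in> ?G\<^sup>+" by (simp add: C_def)
      then obtain z where z: "(i0, z) \<in> ?G\<^sup>*" "(z, j) \<in> ?G" using tranclD2 by metis
      have zC: "z \<in> C"
      proof (cases "z = i0")
        case True then show ?thesis using i0C by simp
      next
        case False then show ?thesis using z(1) by (auto simp: C_def dest: rtranclD)
      qed
      then have "g z = j" using gG(1)[OF zC] z(2) func by metis
      then show "j \<in> g ` C" using zC by blast
    qed
  qed
  have finC: "finite C" by simp
  have ginj: "inj_on g C" using gsurj finC by (simp add: eq_card_imp_inj_on)
  have sC: "b j \<and> s j \<in> set (R (g j))" if "j \<in> C" for j using gG(1)[OF that] by (simp add: Gr_def)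
  define pj where "pj j = (SOME p. p < length (R (g j)) \<and> R (g j) ! p = s j)" for j
  have pj: "pj j < length (R (g j)) \<and> R (g j) ! pj j = s j" if "j \<in> C" for j
    unfolding pj_def by (rule someI_ex) (use sC[OF that] in \<open>metis in_set_conv_nth\<close>)
  define R' where "R' j = (if j \<in> C then drop (pj j) (R (g j)) else R j)" for j
  define b' where "b' j = (if j \<in> C then False else b j)" for j
  define h where "h j = (if j \<in> C then g j else j)" for j
  have hinj: "h j1 \<noteq> h j2" if "j1 \<noteq> j2" for j1 j2
    using that ginj gG(2) unfolding h_def inj_on_def by auto
  have sub: "set (R' j) \<subseteq> set (R (h j))" for j
    unfolding R'_def h_def by (auto dest: set_drop_subset[THEN subsetD])
  have each: "dir_walk D (R' j) \<and> last (R' j) \<in> range t \<and>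
      (if b' j then (s j, hd (R' j)) \<in> B else hd (R' j) = s j)" for j
  proof (cases "j \<in> C")
    case True
    have w: "dir_walk D (R (g j))" "last (R (g j)) \<in> range t" using v unfolding valid_def by auto
    note dd = dir_walk_drop[OF w(1) conjunct1[OF pj[OF True]]]
    show ?thesis using dd w pj[OF True] True by (simp add: R'_def b'_def)
  next
    case False
    then show ?thesis using v unfolding valid_def R'_def b'_def by simp
  qed
  have disj: "set (R' j1) \<inter> set (R' j2) = {}" if "j1 \<noteq> j2" for j1 j2
  proof -
    have "set (R (h j1)) \<inter> set (R (h j2)) = {}" using v hinj[OF that] unfolding valid_def by blast
    then show ?thesis using sub[of j1] sub[of j2] by blast
  qed
  have val: "valid b' R'" unfolding valid_def using each disj by blast
  define F where "F j = length (R j) + (if b j then 1 else 0)" for j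
  define F' where "F' j = length (R' j) + (if b' j then 1 else 0)" for j
  have "sum F' C \<le> sum (\<lambda>j. length (R (g j))) C"
    by (rule sum_mono) (auto simp: F'_def R'_def b'_def)
  also have "\<dots> = sum (\<lambda>j. length (R j)) C"
    using sum.reindex[OF ginj, of "\<lambda>j. length (R j)"] gsurj by simp
  also have "\<dots> < sum F C"
    unfolding F_def using sC i0C
    by (intro sum_strict_mono_ex1) auto
  finally have lt: "sum F' C < sum F C" .
  have eq: "sum F' (UNIV - C) = sum F (UNIV - C)"
    by (rule sum.cong) (auto simp: F_def F'_def R'_def b'_def)
  have "mu b' R' = sum F' (UNIV - C) + sum F' C"
    unfolding mu_def F'_def[symmetric] by (rule sum.subset_diff) auto
  also have "\<dots> < sum F (UNIV - C) + sum F C" using lt eq by simp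
  also have "\<dots> = mu b R"
    unfolding mu_def F_def[symmetric] by (rule sum.subset_diff[symmetric]) auto
  finally show ?thesis using val by blast
qed

end

context sysctx begin

lemma good_sys:
  assumes "\<exists>P. half_trek_system_nsi D B (range s) (range t) P"
  shows "\<exists>b R. valid b R \<and> (\<forall>i. distinct (R i)) \<and> (\<forall>i. b i \<longrightarrow> s i \<notin> set (R i))
     \<and> (\<forall>i. (i, i) \<notin> (Gr b R)\<^sup>+)"
proof -
  obtain b0 R0 where "valid b0 R0" using get_sys[OF assms] by blast
  then have "\<exists>x. valid (fst x) (snd x)" by auto
  then obtain x where x: "valid (fst x) (snd x)"
    and mn: "\<And>y. valid (fst y) (snd y) \<Longrightarrow> mu (fst x) (snd x) \<le> mu (fst y) (snd y)"
    using ex_has_least_nat[where P="\<lambda>x. valid (fst x) (snd x)" and m="\<lambda>x. mu (fst x) (snd x)"]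
    by metis
  have nob: "\<not> (\<exists>b' R'. valid b' R' \<and> mu b' R' < mu (fst x) (snd x))"
    using mn by (metis fst_conv snd_conv not_le)
  show ?thesis
    apply (rule exI[of _ "fst x"], rule exI[of _ "snd x"])
    using x nob improve_distinct[OF x] improve_bidir[OF x] improve_cycle[OF x] by blast
qed

end

lemma pd_gen:
  fixes Q :: "real^'n^'n" and c :: real and x :: "real^'n"
  assumes d: "\<And>u. Q$u$u = 1" and off: "\<And>u v. u \<noteq> v \<Longrightarrow> \<bar>Q$u$v\<bar> \<le> c"
    and c0: "c \<ge> 0" and cN: "c * real CARD('n) \<le> 1/2" and x: "x \<noteq> 0"
  shows "x \<bullet> (Q *v x) > 0"
proof -
  define S where "S = (\<Sum>u\<in>UNIV. (x$u)^2)"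
  have "x \<bullet> (Q *v x) = (\<Sum>u\<in>UNIV. \<Sum>v\<in>UNIV. x$u * Q$u$v * x$v)"
    by (simp add: inner_vec_def matrix_vector_mult_def sum_distrib_left mult.assoc)
  also have "\<dots> \<ge> (\<Sum>u\<in>UNIV. \<Sum>v\<in>UNIV. (if u = v then (x$u)^2 else 0) - c * ((x$u)^2 + (x$v)^2) / 2)"
  proof (intro sum_mono)
    fix u v
    show "(if u = v then (x$u)^2 else 0) - c * ((x$u)^2 + (x$v)^2) / 2 \<le> x$u * Q$u$v * x$v"
    proof (cases "u = v")
      case True
      then show ?thesis using d[of u] c0 by (simp add: power2_eq_square)
    next
      case False
      have a: "\<bar>x$u * Q$u$v * x$v\<bar> \<le> c * (\<bar>x$u\<bar> * \<bar>x$v\<bar>)"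
      proof -
        have "\<bar>x$u * Q$u$v * x$v\<bar> = \<bar>Q$u$v\<bar> * (\<bar>x$u\<bar> * \<bar>x$v\<bar>)" by (simp add: abs_mult)
        also have "\<dots> \<le> c * (\<bar>x$u\<bar> * \<bar>x$v\<bar>)" using off[OF False] by (rule mult_right_mono) simp
        finally show ?thesis .
      qed
      have b: "\<bar>x$u\<bar> * \<bar>x$v\<bar> \<le> ((x$u)^2 + (x$v)^2) / 2"
        using sum_squares_bound[of "\<bar>x$u\<bar>" "\<bar>x$v\<bar>"] by (simp add: power2_abs)
      have "c * (\<bar>x$u\<bar> * \<bar>x$v\<bar>) \<le> c * (((x$u)^2 + (x$v)^2) / 2)"
        using b c0 by (rule mult_left_mono)
      then show ?thesis using a False by (simp add: abs_le_iff)
    qed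
  qed
  also have "(\<Sum>u\<in>UNIV. \<Sum>v\<in>UNIV. (if u = v then (x$u)^2 else 0) - c * ((x$u)^2 + (x$v)^2) / 2)
      = S - c * real CARD('n) * S"
  proof -
    have "(\<Sum>u\<in>UNIV. \<Sum>v\<in>UNIV. (if u = v then (x$u)^2 else 0) - c * ((x$u)^2 + (x$v)^2) / 2)
        = (\<Sum>u\<in>UNIV. (x$u)^2 - (c/2) * (real CARD('n) * (x$u)^2 + S))"
    proof (rule sum.cong[OF refl])
      fix u
      have e1: "(\<Sum>v\<in>UNIV. (if u = v then (x$u)^2 else 0)) = (x$u)^2" by simp
      have e2: "(\<Sum>v\<in>UNIV. c * ((x$u)^2 + (x$v)^2) / 2) = (c/2) * (\<Sum>v\<in>UNIV. (x$u)^2 + (x$v)^2)"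
        by (simp add: sum_distrib_left)
      have e3: "(\<Sum>v\<in>UNIV. (x$u)^2 + (x$v)^2) = real CARD('n) * (x$u)^2 + S"
        by (simp add: sum.distrib S_def)
      show "(\<Sum>v\<in>UNIV. (if u = v then (x$u)^2 else 0) - c * ((x$u)^2 + (x$v)^2) / 2)
          = (x$u)^2 - (c/2) * (real CARD('n) * (x$u)^2 + S)"
        by (simp only: sum_subtractf e1 e2 e3)
    qed
    also have "\<dots> = S - (c/2) * (real CARD('n) * S + real CARD('n) * S)"
    proof -
      have "(\<Sum>u\<in>UNIV. (x$u)^2 - (c/2) * (real CARD('n) * (x$u)^2 + S))
          = S - (c/2) * (\<Sum>u\<in>UNIV. real CARD('n) * (x$u)^2 + S)"
        by (simp add: sum_subtractf sum_distrib_left S_def)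
      also have "(\<Sum>u\<in>UNIV. real CARD('n) * (x$u)^2 + S) = real CARD('n) * S + real CARD('n) * S"
        by (simp add: sum.distrib sum_distrib_left[symmetric] S_def)
      finally show ?thesis .
    qed
    finally show ?thesis by (simp add: algebra_simps)
  qed
  finally have ge: "x \<bullet> (Q *v x) \<ge> S - c * real CARD('n) * S" .
  obtain u where "x$u \<noteq> 0" using x by (metis vec_eq_iff zero_index)
  then have "S > 0" unfolding S_def
    by (intro sum_pos2[of UNIV u]) simp_all
  then have "c * real CARD('n) * S \<le> (1/2) * S" using cN by (intro mult_right_mono) auto
  then have "S - c * real CARD('n) * S \<ge> S / 2" by simp
  then show ?thesis using ge \<open>S > 0\<close> by linarith
qed

locale good = sysctx D B s t for D B :: "('n::finite \<times> 'n) set" and s t :: "'k::finite \<Rightarrow> 'n" +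
  fixes b :: "'k \<Rightarrow> bool" and R :: "'k \<Rightarrow> 'n list"
  assumes mg: "mixed_graph D B"
    and v: "valid b R" and dist: "\<And>i. distinct (R i)"
    and n2: "\<And>i. b i \<Longrightarrow> s i \<notin> set (R i)"
    and acyc: "\<And>i. (i, i) \<notin> (Gr b R)\<^sup>+"
begin

lemma walk: "dir_walk D (R i)" and lastR: "last (R i) \<in> range t"
  and topc: "if b i then (s i, hd (R i)) \<in> B else hd (R i) = s i"
  using v unfolding valid_def by blast+

lemma disj: "i \<noteq> j \<Longrightarrow> set (R i) \<inter> set (R j) = {}"
  using v unfolding valid_def by blast

lemma Rne: "R i \<noteq> []" using walk[of i] unfolding dir_walk_def by simp

lemma U:
  assumes "p < length (R m)" "p' < length (R m')" "R m ! p = R m' ! p'"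
  shows "m = m' \<and> p = p'"
proof -
  have "m = m'"
  proof (rule ccontr)
    assume "m \<noteq> m'"
    then show False using disj[of m m'] assms by (metis disjoint_iff nth_mem)
  qed
  then show ?thesis using assms dist by (simp add: nth_eq_iff_index_eq)
qed

definition before :: "'n \<Rightarrow> 'n \<Rightarrow> bool" where
  "before u v \<longleftrightarrow> (\<exists>m p q. p < q \<and> q < length (R m) \<and> R m ! p = u \<and> R m ! q = v)"

definition sc :: "'n \<Rightarrow> 'n \<Rightarrow> bool" where
  "sc u v \<longleftrightarrow> (\<exists>m p. Suc p < length (R m) \<and> R m ! p = u \<and> R m ! Suc p = v)"

lemma before_irrefl: "\<not> before u u"
  unfolding before_def using U by (metis less_trans nat_neq_iff)

lemma before_trans: "before u v \<Longrightarrow> before v w \<Longrightarrow> before u w"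
  unfolding before_def
proof (elim exE conjE)
  fix m p q m' p' q'
  assume a: "p < q" "q < length (R m)" "R m ! p = u" "R m ! q = v"
    "p' < q'" "q' < length (R m')" "R m' ! p' = v" "R m' ! q' = w"
  then have "m = m' \<and> q = p'" using U[of q m p' m'] by simp
  then show "\<exists>m p q. p < q \<and> q < length (R m) \<and> R m ! p = u \<and> R m ! q = w" using a
    by (intro exI[of _ m] exI[of _ p] exI[of _ q']) auto
qed

lemma sc_before: "sc u v \<Longrightarrow> before u v"
  unfolding sc_def before_def by (metis lessI)

lemma sc_uniq_r: "sc u z \<Longrightarrow> sc u z' \<Longrightarrow> z = z'"
  unfolding sc_def using U by (metis Suc_lessD)

lemma sc_uniq_l: "sc h v \<Longrightarrow> sc h' v \<Longrightarrow> h = h'"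
  unfolding sc_def using U by (metis Suc_inject)

lemma sc_before_iff:
  assumes "sc u z0" shows "before u w \<longleftrightarrow> (z0 = w \<or> before z0 w)"
proof
  assume "before u w"
  then obtain m p q where a: "p < q" "q < length (R m)" "R m ! p = u" "R m ! q = w"
    unfolding before_def by blast
  obtain m' p' where b: "Suc p' < length (R m')" "R m' ! p' = u" "R m' ! Suc p' = z0"
    using assms unfolding sc_def by blast
  have "m = m' \<and> p = p'" using U[of p m p' m'] a b by simp
  then show "z0 = w \<or> before z0 w" using a b unfolding before_def
    by (metis Suc_lessI)
next
  assume "z0 = w \<or> before z0 w"
  then show "before u w" using sc_before[OF assms] before_trans by blast
qed

lemma no_sc_before: "\<not> (\<exists>z. sc u z) \<Longrightarrow> \<not> before u w"
  unfolding sc_def before_def by (metis Suc_lessI less_trans_Suc Suc_leI le_less_trans not_less_eq)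

definition Mf :: "'n \<Rightarrow> 'n \<Rightarrow> real" where
  "Mf u w = (if u = w \<or> before u w then 1 else 0)"

definition Lf :: "'n \<Rightarrow> 'n \<Rightarrow> real" where
  "Lf u w = (if sc u w then 1 else 0)"

definition Lm :: "real^'n^'n" where "Lm = (\<chi> u w. Lf u w)"
definition Mm :: "real^'n^'n" where "Mm = (\<chi> u w. Mf u w)"

lemma sumL: "(\<Sum>z\<in>UNIV. Lf u z * Mf z w) = (if \<exists>z. sc u z then Mf (SOME z. sc u z) w else 0)"
proof (cases "\<exists>z. sc u z")
  case True
  define z0 where "z0 = (SOME z. sc u z)"
  have z0: "sc u z0" using True unfolding z0_def by (rule someI_ex)
  have "(\<Sum>z\<in>UNIV. Lf u z * Mf z w) = (\<Sum>z\<in>UNIV. if z = z0 then Mf z0 w else 0)"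
    by (rule sum.cong) (auto simp: Lf_def z0 dest: sc_uniq_r[OF z0])
  also have "\<dots> = Mf z0 w" by simp
  finally show ?thesis using True z0_def by simp
next
  case False
  then show ?thesis by (simp add: Lf_def)
qed

lemma inv_right: "(mat 1 - Lm) ** Mm = mat 1"
proof -
  have "((mat 1 - Lm) ** Mm) $ u $ w = mat 1 $ u $ w" for u w
  proof -
    have "((mat 1 - Lm) ** Mm) $ u $ w = (\<Sum>z\<in>UNIV. ((if u = z then 1 else 0) - Lf u z) * Mf z w)"
      by (simp add: matrix_matrix_mult_def mat_def Lm_def Mm_def)
    also have "\<dots> = Mf u w - (\<Sum>z\<in>UNIV. Lf u z * Mf z w)"
    proof -
      have "(\<Sum>z\<in>UNIV. ((if u = z then 1 else 0) - Lf u z) * Mf z w)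
          = (\<Sum>z\<in>UNIV. (if u = z then Mf z w else 0) - Lf u z * Mf z w)"
        by (rule sum.cong) (auto simp: algebra_simps)
      also have "\<dots> = (\<Sum>z\<in>UNIV. (if u = z then Mf z w else 0)) - (\<Sum>z\<in>UNIV. Lf u z * Mf z w)"
        by (rule sum_subtractf)
      finally show ?thesis by simp
    qed
    also have "\<dots> = (if u = w then 1 else 0)"
    proof (cases "\<exists>z. sc u z")
      case True
      define z0 where "z0 = (SOME z. sc u z)"
      have z0: "sc u z0" using True unfolding z0_def by (rule someI_ex)
      have nz: "z0 \<noteq> u" using sc_before[OF z0] before_irrefl by metis
      have "\<not> before z0 u" using sc_before[OF z0] before_trans before_irrefl by metis
      moreover have sL: "(\<Sum>z\<in>UNIV. Lf u z * Mf z w) = Mf z0 w" using sumL True z0_def by simp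
      ultimately show ?thesis unfolding sL using sc_before_iff[OF z0, of w] nz
        by (auto simp: Mf_def)
    next
      case False
      have sL: "(\<Sum>z\<in>UNIV. Lf u z * Mf z w) = 0" using sumL False by simp
      show ?thesis unfolding sL using no_sc_before[OF False] by (simp add: Mf_def)
    qed
    finally show ?thesis by (simp add: mat_def)
  qed
  then show ?thesis by (simp add: vec_eq_iff)
qed

lemma inv_left: "Mm ** (mat 1 - Lm) = mat 1"
  using inv_right matrix_left_right_inverse by blast

lemma invertible_IL: "invertible (mat 1 - Lm)"
  unfolding invertible_def using inv_left inv_right by blast

lemma matrix_inv_IL: "matrix_inv (mat 1 - Lm) = Mm"
proof -
  let ?A = "mat 1 - Lm"
  have ex: "\<exists>A'. ?A ** A' = mat 1 \<and> A' ** ?A = mat 1" using inv_left inv_right by blast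
  define X where "X = matrix_inv ?A"
  have X: "?A ** X = mat 1 \<and> X ** ?A = mat 1" unfolding X_def matrix_inv_def by (rule someI_ex[OF ex])
  have "X = X ** (?A ** Mm)" using inv_right by (simp add: matrix_mul_rid)
  also have "\<dots> = (X ** ?A) ** Mm" by (simp add: matrix_mul_assoc)
  also have "\<dots> = Mm" using X by (simp add: matrix_mul_lid)
  finally show ?thesis unfolding X_def .
qed

end

context good begin

definition topr :: "'n \<Rightarrow> 'n \<Rightarrow> bool" where
  "topr u v \<longleftrightarrow> (\<exists>m. b m \<and> ((u = s m \<and> v = hd (R m)) \<or> (u = hd (R m) \<and> v = s m)))"

definition cc :: real where "cc = 1 / (2 * real CARD('n))"

definition Of :: "'n \<Rightarrow> 'n \<Rightarrow> real" where
  "Of u v = (if u = v then 1 else if topr u v then cc else 0)"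

definition Om :: "real^'n^'n" where "Om = (\<chi> u v. Of u v)"

lemma cc_pos: "cc > 0" unfolding cc_def by simp

lemma Of_nonneg: "Of u v \<ge> 0" using cc_pos by (simp add: Of_def)

lemma params_ok: "params D B Lm Om"
proof -
  have symB: "sym B" using mg unfolding mixed_graph_def by simp
  have l: "(u, v) \<in> D" if "Lm $ u $ v \<noteq> 0" for u v
  proof -
    have "sc u v" using that by (simp add: Lm_def Lf_def split: if_splits)
    then obtain m p where "Suc p < length (R m)" "R m ! p = u" "R m ! Suc p = v" unfolding sc_def by blast
    then show ?thesis using walk[of m] unfolding dir_walk_def by blast
  qed
  have tr: "transpose Om = Om"
  proof -
    have "Of u v = Of v u" for u v unfolding Of_def topr_def by auto
    then show ?thesis by (simp add: vec_eq_iff transpose_def Om_def)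
  qed
  have pd: "x \<bullet> (Om *v x) > 0" if "x \<noteq> 0" for x
  proof (rule pd_gen[where c=cc])
    show "Om $ u $ u = 1" for u by (simp add: Om_def Of_def)
    show "\<bar>Om $ u $ v\<bar> \<le> cc" if "u \<noteq> v" for u v using that cc_pos by (simp add: Om_def Of_def)
    show "cc \<ge> 0" using cc_pos by simp
    show "cc * real CARD('n) \<le> 1/2" by (simp add: cc_def)
    show "x \<noteq> 0" by fact
  qed
  have o: "(u, v) \<in> B" if "u \<noteq> v \<and> Om $ u $ v \<noteq> 0" for u v
  proof -
    have "topr u v" using that by (simp add: Om_def Of_def split: if_splits)
    then obtain m where m: "b m" "(u = s m \<and> v = hd (R m)) \<or> (u = hd (R m) \<and> v = s m)"
      unfolding topr_def by blast
    have "(s m, hd (R m)) \<in> B" using topc[of m] m(1) by simp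
    then show ?thesis using m(2) symB by (auto dest: symD)
  qed
  show ?thesis unfolding params_def pos_def_mat_def
    using l invertible_IL tr pd o by blast
qed

lemma phi_ent: "phi Lm Om $ a $ c = (\<Sum>y\<in>UNIV. \<Sum>x\<in>UNIV. Mf x a * Of x y * Mf y c)"
  unfolding phi_def matrix_inv_IL
  by (simp add: matrix_matrix_mult_def transpose_def Mm_def Om_def sum_distrib_right)

definition cf :: "'n set \<Rightarrow> 'n \<Rightarrow> 'n \<Rightarrow> real" where
  "cf H v x = Mf x v - (\<Sum>h\<in>H. Lf h v * Mf x h)"

lemma Lm_ent: "Lm $ u $ v = Lf u v" by (simp add: Lm_def)

lemma A_ent:
  "phi Lm Om $ v $ c - (\<Sum>h\<in>H. phi Lm Om $ h $ c * Lm $ h $ v)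
   = (\<Sum>y\<in>UNIV. \<Sum>x\<in>UNIV. cf H v x * Of x y * Mf y c)"
proof -
  have "(\<Sum>h\<in>H. phi Lm Om $ h $ c * Lm $ h $ v)
      = (\<Sum>h\<in>H. \<Sum>y\<in>UNIV. \<Sum>x\<in>UNIV. Lf h v * Mf x h * Of x y * Mf y c)"
    by (simp only: phi_ent Lm_ent sum_distrib_right sum_distrib_left mult.commute mult.left_commute)
  also have "\<dots> = (\<Sum>y\<in>UNIV. \<Sum>h\<in>H. \<Sum>x\<in>UNIV. Lf h v * Mf x h * Of x y * Mf y c)"
    by (rule sum.swap)
  also have "\<dots> = (\<Sum>y\<in>UNIV. \<Sum>x\<in>UNIV. \<Sum>h\<in>H. Lf h v * Mf x h * Of x y * Mf y c)"
    by (rule sum.cong[OF refl], rule sum.swap)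
  also have "\<dots> = (\<Sum>y\<in>UNIV. \<Sum>x\<in>UNIV. (\<Sum>h\<in>H. Lf h v * Mf x h) * Of x y * Mf y c)"
    by (simp add: sum_distrib_right)
  finally have e: "(\<Sum>h\<in>H. phi Lm Om $ h $ c * Lm $ h $ v)
      = (\<Sum>y\<in>UNIV. \<Sum>x\<in>UNIV. (\<Sum>h\<in>H. Lf h v * Mf x h) * Of x y * Mf y c)" .
  show ?thesis unfolding e unfolding phi_ent cf_def
    by (simp add: sum_subtractf[symmetric] left_diff_distrib)
qed

lemma Mf_nonneg: "Mf u v \<ge> 0" by (simp add: Mf_def)

lemma cf_props: "cf H v x \<ge> 0" "cf H v v = 1" "cf H v x \<noteq> 0 \<Longrightarrow> x = v \<or> before x v"
proof -
  have "(cf H v x \<ge> 0) \<and> (cf H v v = 1) \<and> (cf H v x \<noteq> 0 \<longrightarrow> x = v \<or> before x v)"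
  proof (cases "\<exists>h0. sc h0 v")
    case True
    then obtain h0 where h0: "sc h0 v" by blast
    have sm: "(\<Sum>h\<in>H. Lf h v * Mf y h) = (if h0 \<in> H then Mf y h0 else 0)" for y
    proof -
      have "(\<Sum>h\<in>H. Lf h v * Mf y h) = (\<Sum>h\<in>H. if h = h0 then Mf y h0 else 0)"
      proof (rule sum.cong[OF refl])
        fix h
        show "Lf h v * Mf y h = (if h = h0 then Mf y h0 else 0)"
        proof (cases "h = h0")
          case True then show ?thesis using h0 by (simp add: Lf_def)
        next
          case False
          then have "\<not> sc h v" using sc_uniq_l[OF _ h0] by blast
          then show ?thesis using False by (simp add: Lf_def)
        qed
      qed
      then show ?thesis by simp
    qed
    have le: "Mf y h0 \<le> Mf y v" for y
    proof (cases "y = h0 \<or> before y h0")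
      case True
      then have "before y v" using sc_before[OF h0] before_trans[of y h0 v] by blast
      then show ?thesis by (simp add: Mf_def)
    next
      case False
      then show ?thesis by (simp add: Mf_def)
    qed
    have hv: "before h0 v" by (rule sc_before[OF h0])
    have "v \<noteq> h0" using hv before_irrefl by metis
    moreover have "\<not> before v h0" using hv before_trans[of v h0 v] before_irrefl[of v] by blast
    ultimately have z: "Mf v h0 = 0" by (simp add: Mf_def)
    show ?thesis using le[of x] z Mf_nonneg[of x h0] hv before_trans[of x h0 v] unfolding cf_def sm
      by (auto simp: Mf_def)
  next
    case False
    have sm: "(\<Sum>h\<in>H. Lf h v * Mf y h) = 0" for y using False by (simp add: Lf_def)
    show ?thesis unfolding cf_def sm by (auto simp: Mf_def)
  qed
  then show "cf H v x \<ge> 0" "cf H v v = 1" "cf H v x \<noteq> 0 \<Longrightarrow> x = v \<or> before x v" by auto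
qed

end

context good begin

lemma Gr_iff: "(i, m) \<in> Gr b R \<longleftrightarrow> b i \<and> s i \<in> set (R m)" by (simp add: Gr_def)

lemma s_in: "\<not> b i \<Longrightarrow> s i \<in> set (R i)"
  using topc[of i] Rne[of i] by (metis hd_in_set)

lemma hd_in: "hd (R m) \<in> set (R m)" using Rne by simp

lemma inset_same: "v \<in> set (R m) \<Longrightarrow> v \<in> set (R m') \<Longrightarrow> m = m'"
  using disj[of m m'] by blast

definition hh :: "'k \<Rightarrow> nat" where "hh i = card {j. (i, j) \<in> (Gr b R)\<^sup>+}"

definition pos :: "'n \<Rightarrow> nat" where
  "pos v = (if \<exists>m p. p < length (R m) \<and> R m ! p = v
            then (SOME p. \<exists>m. p < length (R m) \<and> R m ! p = v) else 0)"

definition ff :: "'k \<Rightarrow> nat" where "ff i = hh i * CARD('n) + pos (s i)"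

lemma pos_eq: assumes "p < length (R m)" "R m ! p = v" shows "pos v = p"
proof -
  have ex: "\<exists>p m. p < length (R m) \<and> R m ! p = v" using assms by blast
  have ex2: "\<exists>m p. p < length (R m) \<and> R m ! p = v" using assms by blast
  have pv: "pos v = (SOME p. \<exists>m. p < length (R m) \<and> R m ! p = v)"
    using ex2 unfolding pos_def by (simp only: if_True)
  have "\<exists>m. (SOME p. \<exists>m. p < length (R m) \<and> R m ! p = v) < length (R m) \<and>
      R m ! (SOME p. \<exists>m. p < length (R m) \<and> R m ! p = v) = v"
    by (rule someI_ex[OF ex])
  then obtain m' where m': "pos v < length (R m') \<and> R m' ! pos v = v" unfolding pv by blast
  then show ?thesis using U[of p m "pos v" m'] assms by auto
qed

lemma pos_lt: "pos v < CARD('n)"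
proof (cases "\<exists>m p. p < length (R m) \<and> R m ! p = v")
  case True
  then obtain m p where mp: "p < length (R m)" "R m ! p = v" by blast
  have "length (R m) = card (set (R m))" using dist[of m] by (simp add: distinct_card)
  also have "\<dots> \<le> CARD('n)" by (rule card_mono) auto
  finally show ?thesis using pos_eq[OF mp] mp(1) by simp
next
  case False
  then have "pos v = 0" unfolding pos_def by (simp only: if_False)
  then show ?thesis by simp
qed

lemma hh_lt: assumes "(i, m) \<in> Gr b R" shows "hh m < hh i"
proof -
  have "{j. (m, j) \<in> (Gr b R)\<^sup>+} \<subset> {j. (i, j) \<in> (Gr b R)\<^sup>+}"
  proof
    show "{j. (m, j) \<in> (Gr b R)\<^sup>+} \<subseteq> {j. (i, j) \<in> (Gr b R)\<^sup>+}"
      using assms by (auto intro: trancl_into_trancl2)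
    have "m \<notin> {j. (m, j) \<in> (Gr b R)\<^sup>+}" using acyc by simp
    moreover have "m \<in> {j. (i, j) \<in> (Gr b R)\<^sup>+}" using assms by auto
    ultimately show "{j. (m, j) \<in> (Gr b R)\<^sup>+} \<noteq> {j. (i, j) \<in> (Gr b R)\<^sup>+}" by blast
  qed
  then show ?thesis unfolding hh_def by (rule psubset_card_mono[rotated]) simp
qed

lemma reach_iff: assumes "(i, m) \<in> Gr b R"
  shows "(i, x) \<in> (Gr b R)\<^sup>+ \<longleftrightarrow> x = m \<or> (m, x) \<in> (Gr b R)\<^sup>+"
proof
  assume "(i, x) \<in> (Gr b R)\<^sup>+"
  then obtain z where z: "(i, z) \<in> Gr b R" "(z, x) \<in> (Gr b R)\<^sup>*" using tranclD by metis
  have "z = m" using Gr_func[OF v z(1) assms] .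
  then show "x = m \<or> (m, x) \<in> (Gr b R)\<^sup>+" using z(2) by (auto dest: rtranclD)
next
  assume "x = m \<or> (m, x) \<in> (Gr b R)\<^sup>+"
  then show "(i, x) \<in> (Gr b R)\<^sup>+" using assms by (auto intro: trancl_into_trancl2)
qed

lemma hh_eq: "(i, m) \<in> Gr b R \<Longrightarrow> (j, m) \<in> Gr b R \<Longrightarrow> hh i = hh j"
  unfolding hh_def using reach_iff by presburger

lemma ff_lt: assumes "hh j < hh i" shows "ff j < ff i"
proof -
  have "ff j < (hh j + 1) * CARD('n)" using pos_lt[of "s j"] by (simp add: ff_def)
  also have "\<dots> \<le> hh i * CARD('n)" using assms by (intro mult_right_mono) auto
  also have "\<dots> \<le> ff i" by (simp add: ff_def)
  finally show ?thesis .
qed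

lemma key_a: assumes "s i \<in> set (R j')" shows "j' = i \<or> ff j' < ff i"
proof (cases "j' = i")
  case False
  have "b i" using s_in inset_same assms False by blast
  then have "(i, j') \<in> Gr b R" using assms by (simp add: Gr_iff)
  then show ?thesis using hh_lt ff_lt by blast
qed simp

lemma main_rel:
  assumes cx: "x = s i \<or> before x (s i)" and oxy: "x = y \<or> topr x y" and y: "y \<in> set (R j')"
  shows "j' = i \<or> ff j' < ff i"
  using oxy
proof
  assume xy: "x = y"
  show ?thesis using cx
  proof
    assume "x = s i" then show ?thesis using key_a xy y by blast
  next
    assume "before x (s i)"
    then obtain m p q where a: "p < q" "q < length (R m)" "R m ! p = x" "R m ! q = s i"
      unfolding before_def by blast
    have "x \<in> set (R m)" using a by auto
    then have "m = j'" using inset_same xy y by blast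
    then have "s i \<in> set (R j')" using a by (metis nth_mem)
    then show ?thesis by (rule key_a)
  qed
next
  assume "topr x y"
  then obtain m where bm: "b m" and c: "(x = s m \<and> y = hd (R m)) \<or> (x = hd (R m) \<and> y = s m)"
    unfolding topr_def by blast
  show ?thesis using c
  proof
    assume c1: "x = s m \<and> y = hd (R m)"
    then have mj: "m = j'" using hd_in[of m] y inset_same by blast
    show ?thesis using cx
    proof
      assume "x = s i" then have "m = i" using c1 inj_s by (simp add: inj_eq)
      then show ?thesis using mj by simp
    next
      assume "before x (s i)"
      then obtain m2 p q where a: "p < q" "q < length (R m2)" "R m2 ! p = s j'" "R m2 ! q = s i"
        unfolding before_def using c1 mj by blast
      have bi: "b i"
      proof (rule ccontr)
        assume nb: "\<not> b i"
        then have "R i ! 0 = s i" using topc[of i] Rne[of i] by (simp add: hd_conv_nth)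
        then have "q = 0" using U[of q m2 0 i] a Rne[of i] by simp
        then show False using a by simp
      qed
      have g1: "(i, m2) \<in> Gr b R" using bi a nth_mem[of q "R m2"] by (auto simp: Gr_iff)
      have g2: "(j', m2) \<in> Gr b R" using bm mj a nth_mem[of p "R m2"] by (auto simp: Gr_iff)
      have "hh i = hh j'" using hh_eq[OF g1 g2] .
      moreover have "pos (s j') < pos (s i)" using pos_eq[of p m2] pos_eq[of q m2] a by simp
      ultimately show ?thesis by (simp add: ff_def)
    qed
  next
    assume c2: "x = hd (R m) \<and> y = s m"
    have sim: "s i \<in> set (R m)" using cx
    proof
      assume "x = s i" then show ?thesis using c2 hd_in by metis
    next
      assume "before x (s i)"
      then obtain m2 p q where a: "p < q" "q < length (R m2)" "R m2 ! p = x" "R m2 ! q = s i"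
        unfolding before_def by blast
      have "x \<in> set (R m2)" using a by auto
      then have "m2 = m" using c2 hd_in inset_same by metis
      then show ?thesis using a by (metis nth_mem)
    qed
    have mi: "m \<noteq> i" using n2 bm sim by blast
    have bi: "b i" using s_in sim inset_same mi by blast
    have g1: "(i, m) \<in> Gr b R" using bi sim by (simp add: Gr_iff)
    have g2: "(m, j') \<in> Gr b R" using bm c2 y by (simp add: Gr_iff)
    have "hh j' < hh i" using hh_lt[OF g1] hh_lt[OF g2] by simp
    then show ?thesis using ff_lt by blast
  qed
qed

end

lemma det_single:
  fixes A :: "real^'k^'k" and f :: "'k \<Rightarrow> nat"
  assumes bij: "bij \<tau>"
    and supp: "\<And>i j. A$i$j \<noteq> 0 \<Longrightarrow> \<exists>i'. \<tau> i' = j \<and> (i' = i \<or> f i' < f i)"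
    and diag: "\<And>i. A$i$(\<tau> i) \<noteq> 0"
  shows "det A \<noteq> 0"
proof -
  have tp: "\<tau> permutes UNIV" using bij by (simp add: permutes_altdef)
  have zero: "prod (\<lambda>i. A$i$p i) UNIV = 0" if p: "p permutes UNIV" "p \<noteq> \<tau>" for p
  proof (rule ccontr)
    assume "prod (\<lambda>i. A$i$p i) UNIV \<noteq> 0"
    then have nz: "\<And>i. A$i$p i \<noteq> 0" by auto
    define q where "q i = inv \<tau> (p i)" for i
    have qb: "bij q" unfolding q_def
      using bij permutes_bij[OF p(1)] bij_comp[of p "inv \<tau>"] bij_imp_bij_inv[OF bij] by (simp add: comp_def)
    have qle: "q i = i \<or> f (q i) < f i" for i
    proof -
      obtain i' where "\<tau> i' = p i" "i' = i \<or> f i' < f i" using supp[OF nz[of i]] by blast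
      then show ?thesis unfolding q_def using bij by (metis bij_inv_eq_iff)
    qed
    have "\<exists>i0. q i0 \<noteq> i0"
    proof (rule ccontr)
      assume "\<not> ?thesis"
      then have "\<And>i. p i = \<tau> i" unfolding q_def using bij by (metis bij_inv_eq_iff)
      then show False using p(2) by auto
    qed
    then obtain i0 where i0: "q i0 \<noteq> i0" by blast
    have "(\<Sum>i\<in>UNIV. f (q i)) < (\<Sum>i\<in>UNIV. f i)"
    proof (rule sum_strict_mono_ex1)
      show "\<forall>x\<in>UNIV. f (q x) \<le> f x" using qle by (metis order.order_iff_strict)
      show "\<exists>a\<in>UNIV. f (q a) < f a" using qle[of i0] i0 by blast
    qed simp
    moreover have "(\<Sum>i\<in>UNIV. f (q i)) = (\<Sum>i\<in>UNIV. f i)"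
      using sum.reindex[of q UNIV f] qb by (simp add: bij_def)
    ultimately show False by simp
  qed
  have "det A = of_int (sign \<tau>) * prod (\<lambda>i. A$i$\<tau> i) UNIV"
    unfolding det_def
    apply (subst sum.remove[where x=\<tau>])
    using tp apply (simp_all add: finite_permutations)
    apply (rule sum.neutral)
    using zero by simp
  moreover have "prod (\<lambda>i. A$i$\<tau> i) UNIV \<noteq> 0" using diag by simp
  moreover have "of_int (sign \<tau>) \<noteq> (0::real)" by (simp add: sign_def)
  ultimately show ?thesis by simp
qed

context good begin

lemma det_ok:
  fixes H :: "'k \<Rightarrow> 'n set"
  shows "det (\<chi> i j. phi Lm Om $ s i $ t j
                 - (\<Sum>h\<in>H i. phi Lm Om $ h $ t j * Lm $ h $ s i) :: real^'k^'k) \<noteq> 0"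
proof -
  define A where "A = (\<chi> i j. phi Lm Om $ s i $ t j
                 - (\<Sum>h\<in>H i. phi Lm Om $ h $ t j * Lm $ h $ s i) :: real^'k^'k)"
  have Aij: "A $ i $ j = (\<Sum>y\<in>UNIV. \<Sum>x\<in>UNIV. cf (H i) (s i) x * Of x y * Mf y (t j))" for i j
    unfolding A_def using A_ent by simp
  define \<tau> where "\<tau> i = inv t (last (R i))" for i
  have t\<tau>: "t (\<tau> i) = last (R i)" for i unfolding \<tau>_def using lastR[of i] by (simp add: f_inv_into_f)
  have lastin: "last (R i) \<in> set (R i)" for i using Rne by simp
  have inj\<tau>: "inj \<tau>"
  proof (rule injI)
    fix i j assume "\<tau> i = \<tau> j"
    then have "last (R i) = last (R j)" using t\<tau> by metis
    then show "i = j" using lastin inset_same by metis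
  qed
  have surj\<tau>: "surj \<tau>" using inj\<tau> by (simp add: finite_UNIV_inj_surj)
  have bij\<tau>: "bij \<tau>" using inj\<tau> surj\<tau> by (simp add: bij_def)
  have nonneg: "cf (H i) (s i) x * Of x y * Mf y c \<ge> 0" for i x y c
    using cf_props(1) Of_nonneg Mf_nonneg by simp
  show ?thesis unfolding A_def[symmetric]
  proof (rule det_single[OF bij\<tau>, where f = ff])
    fix i j assume nz: "A $ i $ j \<noteq> 0"
    obtain y where "(\<Sum>x\<in>UNIV. cf (H i) (s i) x * Of x y * Mf y (t j)) \<noteq> 0"
      using nz unfolding Aij by (metis (no_types, lifting) sum.neutral)
    then obtain x where "cf (H i) (s i) x * Of x y * Mf y (t j) \<noteq> 0"
      by (metis (no_types, lifting) sum.neutral)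
    then have c1: "cf (H i) (s i) x \<noteq> 0" and c2: "Of x y \<noteq> 0" and c3: "Mf y (t j) \<noteq> 0" by auto
    define i' where "i' = inv \<tau> j"
    have ti': "\<tau> i' = j" unfolding i'_def using surj\<tau> by (rule surj_f_inv_f)
    have tj: "t j = last (R i')" using t\<tau>[of i'] ti' by simp
    have yin: "y \<in> set (R i')"
    proof (cases "y = t j")
      case True then show ?thesis using tj lastin by simp
    next
      case False
      then have "before y (t j)" using c3 by (simp add: Mf_def split: if_splits)
      then obtain m p q where a: "p < q" "q < length (R m)" "R m ! p = y" "R m ! q = t j"
        unfolding before_def by blast
      have "R i' ! (length (R i') - 1) = t j" using tj Rne[of i'] by (simp add: last_conv_nth)
      then have "m = i'" using U[of q m "length (R i') - 1" i'] a Rne[of i'] by simp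
      then show ?thesis using a by (metis nth_mem less_trans)
    qed
    have cx: "x = s i \<or> before x (s i)" using cf_props(3)[OF c1] .
    have oxy: "x = y \<or> topr x y" using c2 by (simp add: Of_def split: if_splits)
    show "\<exists>i'. \<tau> i' = j \<and> (i' = i \<or> ff i' < ff i)"
      using main_rel[OF cx oxy yin] ti' by blast
  next
    fix i
    define y0 where "y0 = hd (R i)"
    have hdn: "R i ! 0 = y0" using Rne[of i] by (simp add: y0_def hd_conv_nth)
    have m1: "Mf y0 (t (\<tau> i)) = 1"
    proof (cases "length (R i) = 1")
      case True
      then have "last (R i) = y0" using Rne[of i] hdn by (simp add: last_conv_nth)
      then show ?thesis using t\<tau> by (simp add: Mf_def)
    next
      case False
      then have l: "0 < length (R i) - 1" "length (R i) - 1 < length (R i)" using Rne[of i]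
        by (auto simp: Suc_lessI)
      have "R i ! (length (R i) - 1) = t (\<tau> i)" using t\<tau>[of i] Rne[of i] by (simp add: last_conv_nth)
      then have "before y0 (t (\<tau> i))" unfolding before_def using l hdn by blast
      then show ?thesis by (simp add: Mf_def)
    qed
    have o1: "Of (s i) y0 > 0"
    proof (cases "b i")
      case True
      then have "s i \<noteq> y0" using n2[OF True] hd_in[of i] y0_def by metis
      moreover have "topr (s i) y0" using True unfolding topr_def y0_def by blast
      ultimately show ?thesis using cc_pos by (simp add: Of_def)
    next
      case False
      then have "y0 = s i" using topc[of i] y0_def by simp
      then show ?thesis by (simp add: Of_def)
    qed
    have pos_term: "cf (H i) (s i) (s i) * Of (s i) y0 * Mf y0 (t (\<tau> i)) > 0"
      using cf_props(2) o1 m1 by simp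
    have inner: "(\<Sum>x\<in>UNIV. cf (H i) (s i) x * Of x y0 * Mf y0 (t (\<tau> i))) > 0"
      by (rule sum_pos2[of UNIV "s i"]) (use pos_term nonneg in auto)
    have "(\<Sum>y\<in>UNIV. \<Sum>x\<in>UNIV. cf (H i) (s i) x * Of x y * Mf y (t (\<tau> i))) > 0"
      by (rule sum_pos2[of UNIV y0]) (use inner nonneg in \<open>auto intro: sum_nonneg\<close>)
    then show "A $ i $ \<tau> i \<noteq> 0" unfolding Aij by simp
  qed
qed

end

theorem lemma4p2:
  fixes D B :: "('n::finite \<times> 'n) set"
    and s t :: "'k::finite \<Rightarrow> 'n"
    and H :: "'k \<Rightarrow> 'n set"
  assumes "mixed_graph D B"
    and "inj s" and "inj t"
    and "\<And>i. H i \<subseteq> pa D (s i)"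
    and "\<exists>P. half_trek_system_nsi D B (range s) (range t) P"
  shows "\<exists>\<Lambda> \<Omega>. params D B \<Lambda> \<Omega> \<and>
           det (\<chi> i j. phi \<Lambda> \<Omega> $ s i $ t j
                 - (\<Sum>h\<in>H i. phi \<Lambda> \<Omega> $ h $ t j * \<Lambda> $ h $ s i) :: real^'k^'k) \<noteq> 0"
proof -
  interpret sc: sysctx D B s t using assms(2,3) by unfold_locales
  obtain b R where bR: "sc.valid b R" "\<forall>i. distinct (R i)" "\<forall>i. b i \<longrightarrow> s i \<notin> set (R i)"
    "\<forall>i. (i, i) \<notin> (sc.Gr b R)\<^sup>+"
    using sc.good_sys[OF assms(5)] by blast
  interpret g: good D B s t b R
    using assms(1) bR by unfold_locales auto
  show ?thesis using g.params_ok g.det_ok[of H] by blast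
qed

end
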